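(* Let $R$ be a zero-dimensional Gorenstein ring and $M$ a finitely generated $R$-module. Then $\mathrm{char}_R(M)=\mathrm{Ann}_R(M)$.
   Context: $M^*=\mathrm{Hom}_R(M,R)$, $\bigcap^n_RM=(\bigwedge^n_R(M^* ))^*$. For a finitely generated $R$-module $M$, choose $n>0$ and an exact sequence $0\to N\to R^n\to M\to0$ and set $\mathrm{char}_R(M)=\mathrm{im}(\bigcap^n_RN\to\bigcap^n_RR^n=R)$ (independent of the choice). *)

theory Defs
  imports Main "HOL.Modules"
begin

definition ring_ideal :: "'a::comm_ring_1 set \<Rightarrow> bool" where
  "ring_ideal I \<longleftrightarrow> 0 \<in> I \<and> (\<forall>x\<in>I. \<forall>y\<in>I. x + y \<in> I) \<and> (\<forall>r. \<forall>x\<in>I. r * x \<in> I)"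

definition prime_ideal :: "'a::comm_ring_1 set \<Rightarrow> bool" where
  "prime_ideal P \<longleftrightarrow> ring_ideal P \<and> P \<noteq> UNIV \<and> (\<forall>a b. a * b \<in> P \<longrightarrow> a \<in> P \<or> b \<in> P)"

definition maximal_ideal :: "'a::comm_ring_1 set \<Rightarrow> bool" where
  "maximal_ideal P \<longleftrightarrow> ring_ideal P \<and> P \<noteq> UNIV \<and>
     (\<forall>J. ring_ideal J \<and> P \<subseteq> J \<longrightarrow> J = P \<or> J = UNIV)"

definition noetherian_ring :: "'a::comm_ring_1 itself \<Rightarrow> bool" where
  "noetherian_ring _ \<longleftrightarrow> (\<forall>I::'a set. ring_ideal I \<longrightarrow>
     (\<exists>S. finite S \<and> S \<subseteq> I \<and> I = {\<Sum>s\<in>S. c s * s | c. True}))"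

text \<open>Krull dimension zero: every prime ideal is maximal (the ring is nonzero by comm_ring_1).\<close>
definition krull_dim_zero :: "'a::comm_ring_1 itself \<Rightarrow> bool" where
  "krull_dim_zero _ \<longleftrightarrow> (\<forall>P::'a set. prime_ideal P \<longrightarrow> maximal_ideal P)"

text \<open>R is injective as a module over itself (Baer's criterion).\<close>
definition self_injective :: "'a::comm_ring_1 itself \<Rightarrow> bool" where
  "self_injective _ \<longleftrightarrow> (\<forall>I::'a set. \<forall>\<phi>. ring_ideal I \<and>
     (\<forall>x\<in>I. \<forall>y\<in>I. \<phi> (x + y) = \<phi> x + \<phi> y) \<and> (\<forall>r. \<forall>x\<in>I. \<phi> (r * x) = r * \<phi> x)
     \<longrightarrow> (\<exists>c. \<forall>x\<in>I. \<phi> x = c * x))"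

text \<open>A zero-dimensional Gorenstein ring: Noetherian, Krull dimension 0, and of
  injective dimension 0 over itself, i.e. self-injective.\<close>
definition zero_dim_gorenstein :: "'a::comm_ring_1 itself \<Rightarrow> bool" where
  "zero_dim_gorenstein T \<longleftrightarrow> noetherian_ring T \<and> krull_dim_zero T \<and> self_injective T"

definition freemod :: "nat \<Rightarrow> (nat \<Rightarrow> 'a::comm_ring_1) set" where
  "freemod n = {x. \<forall>i\<ge>n. x i = 0}"

text \<open>N^* = Hom_R(N,R) for a submodule N of R^n, functions taken to be 0 outside N.\<close>
definition dual :: "(nat \<Rightarrow> 'a::comm_ring_1) set \<Rightarrow> ((nat \<Rightarrow> 'a) \<Rightarrow> 'a) set" where
  "dual N = {\<phi>. (\<forall>x\<in>N. \<forall>y\<in>N. \<phi> (\<lambda>i. x i + y i) = \<phi> x + \<phi> y) \<and>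
                (\<forall>r. \<forall>x\<in>N. \<phi> (\<lambda>i. r * x i) = r * \<phi> x) \<and>
                (\<forall>x. x \<notin> N \<longrightarrow> \<phi> x = 0)}"

text \<open>Alternating R-multilinear maps D^n -> R, i.e. elements of (wedge^n D)^*.\<close>
definition alt_form :: "nat \<Rightarrow> ('v \<Rightarrow> 'a::comm_ring_1) set \<Rightarrow> ((nat \<Rightarrow> ('v \<Rightarrow> 'a)) \<Rightarrow> 'a) \<Rightarrow> bool" where
  "alt_form n D \<Phi> \<longleftrightarrow>
    (\<forall>f k \<phi> \<psi>. (\<forall>i<n. f i \<in> D) \<and> k < n \<and> \<phi> \<in> D \<and> \<psi> \<in> D \<longrightarrow>
        \<Phi> (f(k := (\<lambda>x. \<phi> x + \<psi> x))) = \<Phi> (f(k := \<phi>)) + \<Phi> (f(k := \<psi>))) \<and>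
    (\<forall>f k r \<phi>. (\<forall>i<n. f i \<in> D) \<and> k < n \<and> \<phi> \<in> D \<longrightarrow>
        \<Phi> (f(k := (\<lambda>x. r * \<phi> x))) = r * \<Phi> (f(k := \<phi>))) \<and>
    (\<forall>f i j. (\<forall>l<n. f l \<in> D) \<and> i < n \<and> j < n \<and> i \<noteq> j \<and> f i = f j \<longrightarrow> \<Phi> f = 0)"

text \<open>char_R(R^n/N): the image of cap^n N -> cap^n R^n = R, where the identification
  cap^n R^n = R is evaluation at e_1^* wedge ... wedge e_n^*, and the map is dual to the
  restriction wedge^n (R^n)^* -> wedge^n N^*.  So the image is the set of values of
  alternating forms on N^* at the restricted coordinate functionals.\<close>
definition char_ideal :: "nat \<Rightarrow> (nat \<Rightarrow> 'a::comm_ring_1) set \<Rightarrow> 'a set" where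
  "char_ideal n N = {\<Phi> (\<lambda>i x. if x \<in> N then x i else 0) | \<Phi>. alt_form n (dual N) \<Phi>}"

definition annihilator :: "('a::comm_ring_1 \<Rightarrow> 'm::ab_group_add \<Rightarrow> 'm) \<Rightarrow> 'a set" where
  "annihilator scale = {r. \<forall>m. scale r m = 0}"

end

theory Submission
  imports Defs "HOL-Combinatorics.Permutations"
begin

definition submod :: "nat \<Rightarrow> (nat \<Rightarrow> 'a::comm_ring_1) set \<Rightarrow> bool" where
  "submod n L \<longleftrightarrow> L \<subseteq> freemod n \<and> (\<lambda>i. 0) \<in> L \<and> (\<forall>x\<in>L. \<forall>y\<in>L. (\<lambda>i. x i + y i) \<in> L)
     \<and> (\<forall>r. \<forall>x\<in>L. (\<lambda>i. r * x i) \<in> L)"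

definition linon :: "(nat \<Rightarrow> 'a::comm_ring_1) set \<Rightarrow> ((nat \<Rightarrow> 'a) \<Rightarrow> 'a) \<Rightarrow> bool" where
  "linon L \<phi> \<longleftrightarrow> (\<forall>x\<in>L. \<forall>y\<in>L. \<phi> (\<lambda>i. x i + y i) = \<phi> x + \<phi> y) \<and> (\<forall>r. \<forall>x\<in>L. \<phi> (\<lambda>i. r * x i) = r * \<phi> x)"

lemma submod_add: "submod n L \<Longrightarrow> x \<in> L \<Longrightarrow> y \<in> L \<Longrightarrow> (\<lambda>i. x i + y i) \<in> L"
  unfolding submod_def by blast
lemma submod_smult: "submod n L \<Longrightarrow> x \<in> L \<Longrightarrow> (\<lambda>i. r * x i) \<in> L"
  unfolding submod_def by blast
lemma submod_zero: "submod n L \<Longrightarrow> (\<lambda>i. 0) \<in> L"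
  unfolding submod_def by blast
lemma submod_free: "submod n L \<Longrightarrow> x \<in> L \<Longrightarrow> i \<ge> n \<Longrightarrow> x i = 0"
  unfolding submod_def freemod_def by blast
lemma submod_diff: assumes "submod n L" "x \<in> L" "y \<in> L" shows "(\<lambda>i. x i - y i) \<in> L"
proof -
  have "(\<lambda>i. x i + (\<lambda>i. (-1) * y i) i) \<in> L"
    by (rule submod_add[OF assms(1,2) submod_smult[OF assms(1,3)]])
  thus ?thesis by simp
qed

lemma submod_sum: fixes p :: nat assumes "submod n L" "\<forall>j<p. g j \<in> L"
  shows "(\<lambda>i. \<Sum>j<p. c j * g j i) \<in> L"
  using assms(2)
proof (induction p)
  case 0 then show ?case using submod_zero[OF assms(1)] by simp
next
  case (Suc p)
  have "(\<lambda>i. (\<lambda>i. \<Sum>j<p. c j * g j i) i + (\<lambda>i. c p * g p i) i) \<in> L"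
    using Suc by (intro submod_add[OF assms(1)] submod_smult[OF assms(1)]) auto
  then show ?case by simp
qed

lemma linon_zero: assumes "submod n L" "linon L \<phi>" shows "\<phi> (\<lambda>i. 0) = 0"
proof -
  have "\<forall>r. \<forall>x\<in>L. \<phi> (\<lambda>i. r * x i) = r * \<phi> x" using assms(2) unfolding linon_def by blast
  from this[rule_format, OF submod_zero[OF assms(1)], of 0] show ?thesis by simp
qed

lemma linon_diff: assumes "submod n L" "linon L \<phi>" "x \<in> L" "y \<in> L"
  shows "\<phi> (\<lambda>i. x i - y i) = \<phi> x - \<phi> y"
proof -
  have h: "\<forall>x\<in>L. \<forall>y\<in>L. \<phi> (\<lambda>i. x i + y i) = \<phi> x + \<phi> y" using assms(2) unfolding linon_def by blast
  have "\<phi> (\<lambda>i. x i + (\<lambda>i. (-1) * y i) i) = \<phi> x + \<phi> (\<lambda>i. (-1) * y i)"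
    using h[rule_format, OF assms(3) submod_smult[OF assms(1,4)]] .
  also have "\<phi> (\<lambda>i. (-1) * y i) = (-1) * \<phi> y" using assms unfolding linon_def by blast
  finally show ?thesis by simp
qed

lemma ext_lemma:
  assumes inj: "self_injective TYPE('a::comm_ring_1)"
  shows "submod m (L :: (nat \<Rightarrow> 'a) set) \<Longrightarrow> linon L \<phi> \<Longrightarrow> \<exists>a. \<forall>y\<in>L. \<phi> y = (\<Sum>i<m. a i * y i)"
proof (induction m arbitrary: L \<phi>)
  case 0
  have "\<forall>y\<in>L. y = (\<lambda>i. 0)" using 0 submod_free[OF 0(1)] by auto
  then show ?case using linon_zero[OF 0] by auto
next
  case (Suc m)
  let ?L' = "{y\<in>L. y m = 0}"
  have sub': "submod m ?L'"
  proof -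
    have "?L' \<subseteq> freemod m"
    proof
      fix y assume "y \<in> ?L'"
      then have "y \<in> L" "y m = 0" by auto
      then have "\<forall>i\<ge>Suc m. y i = 0" using submod_free[OF Suc.prems(1)] by blast
      have "y i = 0" if "i \<ge> m" for i
      proof (cases "i = m")
        case True then show ?thesis using \<open>y m = 0\<close> by simp
      next
        case False then have "i \<ge> Suc m" using that by simp
        then show ?thesis using \<open>\<forall>i\<ge>Suc m. y i = 0\<close> by blast
      qed
      then show "y \<in> freemod m" unfolding freemod_def by blast
    qed
    then show ?thesis using Suc.prems(1) unfolding submod_def by auto
  qed
  have lin': "linon ?L' \<phi>" using Suc.prems(2) unfolding linon_def by auto
  obtain a' where a': "\<forall>y\<in>?L'. \<phi> y = (\<Sum>i<m. a' i * y i)" using Suc.IH[OF sub' lin'] by blast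
  define g where "g = (\<lambda>y. \<phi> y - (\<Sum>i<m. a' i * y i))"
  have gadd: "g (\<lambda>i. x i + y i) = g x + g y" if "x \<in> L" "y \<in> L" for x y
  proof -
    have "\<phi> (\<lambda>i. x i + y i) = \<phi> x + \<phi> y" using Suc.prems(2) that unfolding linon_def by blast
    moreover have "(\<Sum>i<m. a' i * (x i + y i)) = (\<Sum>i<m. a' i * x i) + (\<Sum>i<m. a' i * y i)"
      by (simp add: distrib_left sum.distrib)
    ultimately show ?thesis unfolding g_def by simp
  qed
  have gmul: "g (\<lambda>i. r * x i) = r * g x" if "x \<in> L" for x r
  proof -
    have "\<phi> (\<lambda>i. r * x i) = r * \<phi> x" using Suc.prems(2) that unfolding linon_def by blast
    moreover have "(\<Sum>i<m. a' i * (r * x i)) = r * (\<Sum>i<m. a' i * x i)"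
      by (simp add: sum_distrib_left mult.left_commute)
    ultimately show ?thesis unfolding g_def by (simp add: right_diff_distrib)
  qed
  have geq: "g x = g y" if "x \<in> L" "y \<in> L" "x m = y m" for x y
  proof -
    have z: "(\<lambda>i. x i - y i) \<in> ?L'" using submod_diff[OF Suc.prems(1) that(1,2)] that(3) by auto
    have "g (\<lambda>i. x i - y i) = 0" using a' z unfolding g_def by simp
    moreover have "g (\<lambda>i. x i - y i) = g x - g y"
    proof -
      have "(\<Sum>i<m. a' i * (x i - y i)) = (\<Sum>i<m. a' i * x i) - (\<Sum>i<m. a' i * y i)"
        by (simp add: right_diff_distrib sum_subtractf)
      then show ?thesis using linon_diff[OF Suc.prems that(1,2)] unfolding g_def by simp
    qed
    ultimately show ?thesis by simp
  qed
  define I where "I = {t. \<exists>y\<in>L. y m = t}"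
  define \<theta> where "\<theta> = (\<lambda>t. g (SOME y. y \<in> L \<and> y m = t))"
  have th: "\<theta> (y m) = g y" if "y \<in> L" for y
  proof -
    have "(SOME x. x \<in> L \<and> x m = y m) \<in> L \<and> (SOME x. x \<in> L \<and> x m = y m) m = y m"
      by (rule someI[of _ y]) (use that in auto)
    thus ?thesis unfolding \<theta>_def using geq that by blast
  qed
  have idI: "ring_ideal I"
    unfolding ring_ideal_def I_def
  proof (intro conjI ballI allI)
    show "0 \<in> {t. \<exists>y\<in>L. y m = t}" using submod_zero[OF Suc.prems(1)] by force
    fix x y assume "x \<in> {t. \<exists>y\<in>L. y m = t}" "y \<in> {t. \<exists>y\<in>L. y m = t}"
    then obtain u v where "u \<in> L" "v \<in> L" "u m = x" "v m = y" by auto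
    then show "x + y \<in> {t. \<exists>y\<in>L. y m = t}" using submod_add[OF Suc.prems(1)] by force
  next
    fix r x assume "x \<in> {t. \<exists>y\<in>L. y m = t}"
    then obtain u where "u \<in> L" "u m = x" by auto
    then show "r * x \<in> {t. \<exists>y\<in>L. y m = t}" using submod_smult[OF Suc.prems(1)] by force
  qed
  have thadd: "\<forall>x\<in>I. \<forall>y\<in>I. \<theta> (x + y) = \<theta> x + \<theta> y"
  proof (intro ballI)
    fix x y assume "x \<in> I" "y \<in> I"
    then obtain u v where uv: "u \<in> L" "v \<in> L" "u m = x" "v m = y" unfolding I_def by auto
    have "\<theta> (x + y) = \<theta> ((\<lambda>i. u i + v i) m)" using uv by simp
    also have "\<dots> = g (\<lambda>i. u i + v i)" using th submod_add[OF Suc.prems(1) uv(1,2)] by blast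
    also have "\<dots> = g u + g v" using gadd uv by blast
    finally show "\<theta> (x + y) = \<theta> x + \<theta> y" using uv th[OF uv(1)] th[OF uv(2)] by simp
  qed
  have thmul: "\<forall>r. \<forall>x\<in>I. \<theta> (r * x) = r * \<theta> x"
  proof (intro ballI allI)
    fix r x assume "x \<in> I"
    then obtain u where uv: "u \<in> L" "u m = x" unfolding I_def by auto
    have "\<theta> (r * x) = \<theta> ((\<lambda>i. r * u i) m)" using uv by simp
    also have "\<dots> = g (\<lambda>i. r * u i)" using th submod_smult[OF Suc.prems(1) uv(1)] by blast
    also have "\<dots> = r * g u" using gmul uv by blast
    finally show "\<theta> (r * x) = r * \<theta> x" using uv th[OF uv(1)] by simp
  qed
  obtain c where c: "\<forall>x\<in>I. \<theta> x = c * x"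
    using inj idI thadd thmul unfolding self_injective_def by blast
  show ?case
  proof (intro exI[of _ "a'(m := c)"] ballI)
    fix y assume y: "y \<in> L"
    have "y m \<in> I" using y unfolding I_def by auto
    hence "g y = c * y m" using c th[OF y] by simp
    hence "\<phi> y = (\<Sum>i<m. a' i * y i) + c * y m" unfolding g_def by (simp add: algebra_simps)
    also have "\<dots> = (\<Sum>i<Suc m. (a'(m := c)) i * y i)" by simp
    finally show "\<phi> y = (\<Sum>i<Suc m. (a'(m := c)) i * y i)" .
  qed
qed

lemma sum_split_add: "(\<Sum>j<a+b. (f::nat\<Rightarrow>'a::comm_monoid_add) j) = (\<Sum>j<a. f j) + (\<Sum>j<b. f (a+j))"
  by (induction b) (simp_all add: add.assoc)

lemma submod_restrict: assumes "submod (Suc m) L" shows "submod m {y\<in>L. y m = 0}"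
proof -
  have "{y\<in>L. y m = 0} \<subseteq> freemod m"
  proof
    fix y assume "y \<in> {y\<in>L. y m = 0}"
    then have "y \<in> L" "y m = 0" by auto
    then have "\<forall>i\<ge>Suc m. y i = 0" using submod_free[OF assms] by blast
    have "y i = 0" if "i \<ge> m" for i
    proof (cases "i = m")
      case True then show ?thesis using \<open>y m = 0\<close> by simp
    next
      case False then have "i \<ge> Suc m" using that by simp
      then show ?thesis using \<open>\<forall>i\<ge>Suc m. y i = 0\<close> by blast
    qed
    then show "y \<in> freemod m" unfolding freemod_def by blast
  qed
  then show ?thesis using assms unfolding submod_def by auto
qed

lemma submod_ideal: assumes "submod n L" shows "ring_ideal {t. \<exists>y\<in>L. y m = t}"
  unfolding ring_ideal_def
proof (intro conjI ballI allI)
  show "0 \<in> {t. \<exists>y\<in>L. y m = t}" using submod_zero[OF assms] by force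
  fix x y assume "x \<in> {t. \<exists>y\<in>L. y m = t}" "y \<in> {t. \<exists>y\<in>L. y m = t}"
  then obtain u v where "u \<in> L" "v \<in> L" "u m = x" "v m = y" by auto
  then show "x + y \<in> {t. \<exists>y\<in>L. y m = t}" using submod_add[OF assms] by force
next
  fix r x assume "x \<in> {t. \<exists>y\<in>L. y m = t}"
  then obtain u where "u \<in> L" "u m = x" by auto
  then show "r * x \<in> {t. \<exists>y\<in>L. y m = t}" using submod_smult[OF assms] by force
qed

lemma fg_lemma:
  assumes noeth: "noetherian_ring TYPE('a::comm_ring_1)"
  shows "submod m (L :: (nat \<Rightarrow> 'a) set) \<Longrightarrow>
     \<exists>(p::nat) g. (\<forall>j<p. g j \<in> L) \<and> (\<forall>y\<in>L. \<exists>c. y = (\<lambda>i. \<Sum>j<p. c j * g j i))"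
proof (induction m arbitrary: L)
  case 0
  have "\<forall>y\<in>L. y = (\<lambda>i. 0)" using 0 submod_free[OF 0(1)] by auto
  then show ?case
  proof (intro exI conjI)
    show "\<forall>j<(0::nat). (\<lambda>j i. 0::'a) j \<in> L" by simp
    show "\<forall>y\<in>L. \<exists>c. y = (\<lambda>i. \<Sum>j<(0::nat). c j * (\<lambda>j i. 0::'a) j i)"
      using \<open>\<forall>y\<in>L. y = (\<lambda>i. 0)\<close> by simp
  qed
next
  case (Suc m)
  let ?L' = "{y\<in>L. y m = 0}"
  obtain p' :: nat and g' where g': "\<forall>j<p'. g' j \<in> ?L'" "\<forall>y\<in>?L'. \<exists>c. y = (\<lambda>i. \<Sum>j<p'. c j * g' j i)"
    using Suc.IH[OF submod_restrict[OF Suc.prems]] by blast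
  define I where "I = {t. \<exists>y\<in>L. y m = t}"
  have idI: "ring_ideal I" unfolding I_def by (rule submod_ideal[OF Suc.prems])
  have nI: "\<forall>I::'a set. ring_ideal I \<longrightarrow>
     (\<exists>S. finite S \<and> S \<subseteq> I \<and> I = {\<Sum>s\<in>S. c s * s | c. True})"
    using noeth unfolding noetherian_ring_def by assumption
  from nI[rule_format, OF idI] obtain S where Sc: "finite S \<and> S \<subseteq> I \<and> I = {\<Sum>s\<in>S. c s * s | c. True}" ..
  note S = Sc[THEN conjunct1] Sc[THEN conjunct2, THEN conjunct1] Sc[THEN conjunct2, THEN conjunct2]
  obtain q :: nat and h where h: "S = h ` {i. i < q}" "inj_on h {i. i < q}"
    using finite_imp_nat_seg_image_inj_on[OF S(1)] by blast
  have hq: "{i. i < q} = {..<q}" by auto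
  define l where "l = (\<lambda>j. SOME y. y \<in> L \<and> y m = h j)"
  have l: "l j \<in> L \<and> l j m = h j" if "j < q" for j
  proof -
    have "h j \<in> I" using h S(2) that by auto
    then obtain y where "y \<in> L" "y m = h j" unfolding I_def by auto
    then show ?thesis unfolding l_def by (rule someI[of _ y, OF conjI])
  qed
  define G where "G = (\<lambda>j. if j < p' then g' j else l (j - p'))"
  show ?case
  proof (intro exI[of _ "p' + q"] exI[of _ G] conjI allI impI ballI)
    fix j assume "j < p' + q"
    then show "G j \<in> L" unfolding G_def using g'(1) l by auto
  next
    fix y assume y: "y \<in> L"
    have "y m \<in> I" unfolding I_def using y by auto
    then obtain cc where cc: "y m = (\<Sum>s\<in>S. cc s * s)" using S(3) by auto
    also have "\<dots> = (\<Sum>j<q. cc (h j) * h j)"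
      unfolding h(1) using sum.reindex[OF h(2), of "\<lambda>s. cc s * s"] hq by simp
    finally have ym: "y m = (\<Sum>j<q. cc (h j) * h j)" .
    define w where "w = (\<lambda>i. \<Sum>j<q. cc (h j) * l j i)"
    have wL: "w \<in> L" unfolding w_def by (rule submod_sum[OF Suc.prems]) (use l in blast)
    have wm: "w m = y m" unfolding w_def ym by (rule sum.cong) (use l in auto)
    define z where "z = (\<lambda>i. y i - w i)"
    have "z \<in> ?L'" unfolding z_def using submod_diff[OF Suc.prems y wL] wm by simp
    then obtain d where d: "z = (\<lambda>i. \<Sum>j<p'. d j * g' j i)" using g'(2) by blast
    define C where "C = (\<lambda>j. if j < p' then d j else cc (h (j - p')))"
    have "y = (\<lambda>i. z i + w i)" unfolding z_def by simp
    also have "\<dots> = (\<lambda>i. \<Sum>j<p' + q. C j * G j i)"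
    proof
      fix i
      have "(\<Sum>j<p' + q. C j * G j i) = (\<Sum>j<p'. C j * G j i) + (\<Sum>j<q. C (p' + j) * G (p' + j) i)"
        by (rule sum_split_add)
      also have "(\<Sum>j<p'. C j * G j i) = z i" unfolding d C_def G_def by (rule sum.cong) auto
      also have "(\<Sum>j<q. C (p' + j) * G (p' + j) i) = w i" unfolding w_def C_def G_def by (rule sum.cong) auto
      finally show "z i + w i = (\<Sum>j<p' + q. C j * G j i)" by simp
    qed
    finally have yC: "y = (\<lambda>i. \<Sum>j<p' + q. C j * G j i)" .
    show "\<exists>c. y = (\<lambda>i. \<Sum>j<p' + q. c j * G j i)"
    proof (rule exI[of _ C])
      show "y = (\<lambda>i. \<Sum>j<p' + q. C j * G j i)" by (rule yC)
    qed
  qed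
qed

lemma sum_delta_mult: fixes x :: "nat \<Rightarrow> 'a::comm_ring_1"
  assumes "i0 < n" shows "(\<Sum>i<n. (if i = i0 then 1 else 0) * x i) = x i0"
proof -
  have "(\<Sum>i<n. (if i = i0 then 1 else 0) * x i) = (\<Sum>i<n. if i = i0 then x i else 0)"
    by (rule sum.cong) auto
  also have "\<dots> = x i0" using assms by (simp add: sum.delta)
  finally show ?thesis .
qed

lemma dann:
  fixes N :: "(nat \<Rightarrow> 'a::comm_ring_1) set"
  assumes inj: "self_injective TYPE('a)" and noeth: "noetherian_ring TYPE('a)"
    and sub: "submod n N" and zf: "z \<in> freemod n"
    and perp: "\<forall>k. (\<forall>y\<in>N. (\<Sum>i<n. k i * y i) = 0) \<longrightarrow> (\<Sum>i<n. k i * z i) = 0"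
  shows "z \<in> N"
proof -
  obtain p :: nat and g where g: "\<forall>j<p. g j \<in> N" "\<forall>y\<in>N. \<exists>c. y = (\<lambda>i. \<Sum>j<p. c j * g j i)"
    using fg_lemma[OF noeth sub] by blast
  define W where "W = (\<lambda>k j. if j < p then (\<Sum>i<n. k i * g j i) else (0::'a))"
  define L where "L = range W"
  have Wadd: "(\<lambda>j. W k j + W k' j) = W (\<lambda>i. k i + k' i)" for k k'
    by (rule ext) (simp add: W_def distrib_right sum.distrib)
  have Wmul: "(\<lambda>j. r * W k j) = W (\<lambda>i. r * k i)" for k r
    by (rule ext) (simp add: W_def sum_distrib_left mult.assoc)
  have W0: "(\<lambda>j. 0) = W (\<lambda>i. 0)" by (rule ext) (simp add: W_def)
  have subL: "submod p L"
    unfolding submod_def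
  proof (intro conjI ballI allI)
    show "L \<subseteq> freemod p" unfolding L_def freemod_def W_def by auto
    show "(\<lambda>i. 0) \<in> L" unfolding L_def by (rule image_eqI[where f=W and x="\<lambda>i. 0", OF W0 UNIV_I])
  next
    fix x y assume "x \<in> L" "y \<in> L"
    then obtain k k' where "x = W k" "y = W k'" unfolding L_def by auto
    then show "(\<lambda>i. x i + y i) \<in> L" unfolding L_def using Wadd by simp
  next
    fix r x assume "x \<in> L"
    then obtain k where "x = W k" unfolding L_def by auto
    then show "(\<lambda>i. r * x i) \<in> L" unfolding L_def using Wmul by simp
  qed
  have perpW: "(\<Sum>i<n. k i * z i) = (\<Sum>i<n. k' i * z i)" if "W k = W k'" for k k'
  proof -
    define d where "d = (\<lambda>i. k i - k' i)"
    have dg: "(\<Sum>i<n. d i * g j i) = 0" if "j < p" for j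
    proof -
      have "W k j = W k' j" using \<open>W k = W k'\<close> by simp
      then have "(\<Sum>i<n. k i * g j i) = (\<Sum>i<n. k' i * g j i)" using that unfolding W_def by simp
      then show ?thesis unfolding d_def by (simp add: left_diff_distrib sum_subtractf)
    qed
    have "\<forall>y\<in>N. (\<Sum>i<n. d i * y i) = 0"
    proof
      fix y assume "y \<in> N"
      then obtain c where c: "y = (\<lambda>i. \<Sum>j<p. c j * g j i)" using g(2) by blast
      have "(\<Sum>i<n. d i * y i) = (\<Sum>i<n. \<Sum>j<p. c j * (d i * g j i))"
        unfolding c by (simp add: sum_distrib_left mult.left_commute)
      also have "\<dots> = (\<Sum>j<p. \<Sum>i<n. c j * (d i * g j i))" by (rule sum.swap)
      also have "\<dots> = (\<Sum>j<p. c j * (\<Sum>i<n. d i * g j i))" by (simp add: sum_distrib_left)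
      also have "\<dots> = 0" using dg by simp
      finally show "(\<Sum>i<n. d i * y i) = 0" .
    qed
    then have "(\<Sum>i<n. d i * z i) = 0" using perp by blast
    then show ?thesis unfolding d_def by (simp add: left_diff_distrib sum_subtractf)
  qed
  define \<phi> where "\<phi> = (\<lambda>w. \<Sum>i<n. (SOME k. w = W k) i * z i)"
  have phiW: "\<phi> (W k) = (\<Sum>i<n. k i * z i)" for k
  proof -
    have "W k = W (SOME k'. W k = W k')" by (rule someI[of _ k]) (rule refl)
    then show ?thesis unfolding \<phi>_def using perpW by metis
  qed
  have linL: "linon L \<phi>"
    unfolding linon_def
  proof (intro conjI ballI allI)
    fix x y assume "x \<in> L" "y \<in> L"
    then obtain k k' where kk: "x = W k" "y = W k'" unfolding L_def by auto
    have "\<phi> (\<lambda>i. x i + y i) = \<phi> (W (\<lambda>i. k i + k' i))" using kk Wadd by simp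
    also have "\<dots> = \<phi> x + \<phi> y" unfolding phiW kk by (simp add: distrib_right sum.distrib)
    finally show "\<phi> (\<lambda>i. x i + y i) = \<phi> x + \<phi> y" .
  next
    fix r x assume "x \<in> L"
    then obtain k where kk: "x = W k" unfolding L_def by auto
    have "\<phi> (\<lambda>i. r * x i) = \<phi> (W (\<lambda>i. r * k i))" using kk Wmul by simp
    also have "\<dots> = r * \<phi> x" unfolding phiW kk by (simp add: sum_distrib_left mult.assoc)
    finally show "\<phi> (\<lambda>i. r * x i) = r * \<phi> x" .
  qed
  obtain b where b: "\<forall>w\<in>L. \<phi> w = (\<Sum>j<p. b j * w j)" using ext_lemma[OF inj subL linL] by blast
  have "z = (\<lambda>i. \<Sum>j<p. b j * g j i)"
  proof
    fix i0
    show "z i0 = (\<Sum>j<p. b j * g j i0)"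
    proof (cases "i0 < n")
      case True
      define k where "k = (\<lambda>i. if i = i0 then 1 else (0::'a))"
      have "z i0 = (\<Sum>i<n. k i * z i)" unfolding k_def by (rule sum_delta_mult[OF True, symmetric])
      also have "\<dots> = \<phi> (W k)" by (simp add: phiW)
      also have "\<dots> = (\<Sum>j<p. b j * W k j)" using b unfolding L_def by blast
      also have "\<dots> = (\<Sum>j<p. b j * g j i0)"
      proof (rule sum.cong)
        fix j assume "j \<in> {..<p}"
        then have "W k j = (\<Sum>i<n. k i * g j i)" unfolding W_def by simp
        also have "\<dots> = g j i0" unfolding k_def by (rule sum_delta_mult[OF True])
        finally have "W k j = g j i0" .
        then show "b j * W k j = b j * g j i0" by simp
      qed simp
      finally show ?thesis .
    next
      case False
      then have "z i0 = 0" using zf unfolding freemod_def by auto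
      moreover have "g j i0 = 0" if "j < p" for j using submod_free[OF sub] g(1) that False by auto
      ultimately show ?thesis by simp
    qed
  qed
  then show ?thesis using submod_sum[OF sub g(1)] by simp
qed

definition ldet :: "nat \<Rightarrow> (nat \<Rightarrow> nat \<Rightarrow> 'a::comm_ring_1) \<Rightarrow> 'a" where
  "ldet n A = (\<Sum>p | p permutes {..<n}. of_int (sign p) * (\<Prod>i<n. A i (p i)))"

lemma prod_cong_c:
  fixes c :: "'a::comm_ring_1"
  assumes "finite S" "\<forall>i\<in>S. c * x i = c * y i"
  shows "c * prod x S = c * prod y S"
  using assms
proof (induction S rule: finite_induct)
  case empty then show ?case by simp
next
  case (insert a S)
  have "c * prod x (insert a S) = x a * (c * prod x S)" using insert.hyps by (simp add: ac_simps)
  also have "\<dots> = x a * (c * prod y S)"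
  proof -
    have h: "c * prod x S = c * prod y S" using insert.IH insert.prems by simp
    show ?thesis by (simp only: h)
  qed
  also have "\<dots> = (c * x a) * prod y S" by (simp add: ac_simps)
  also have "\<dots> = (c * y a) * prod y S" using insert.prems by simp
  also have "\<dots> = c * prod y (insert a S)" using insert.hyps by (simp add: ac_simps)
  finally show ?case .
qed

lemma ldet_cong_c:
  fixes c :: "'a::comm_ring_1"
  assumes "\<forall>i<n. \<forall>j<n. c * A i j = c * B i j"
  shows "c * ldet n A = c * ldet n B"
proof -
  have "c * ldet n A = (\<Sum>p | p permutes {..<n}. of_int (sign p) * (c * (\<Prod>i<n. A i (p i))))"
    unfolding ldet_def by (simp add: sum_distrib_left ac_simps)
  also have "\<dots> = (\<Sum>p | p permutes {..<n}. of_int (sign p) * (c * (\<Prod>i<n. B i (p i))))"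
  proof (rule sum.cong)
    fix p assume "p \<in> {p. p permutes {..<n}}"
    then have p: "p permutes {..<n}" by simp
    have "c * (\<Prod>i<n. A i (p i)) = c * (\<Prod>i<n. B i (p i))"
    proof (rule prod_cong_c)
      show "\<forall>i\<in>{..<n}. c * A i (p i) = c * B i (p i)"
        using assms permutes_in_image[OF p] by auto
    qed simp
    then show "of_int (sign p) * (c * (\<Prod>i<n. A i (p i))) = of_int (sign p) * (c * (\<Prod>i<n. B i (p i)))"
      by simp
  qed simp
  also have "\<dots> = c * ldet n B"
    unfolding ldet_def by (simp add: sum_distrib_left ac_simps)
  finally show ?thesis .
qed

lemma ldet_row:
  assumes k: "k < n"
  shows "ldet n (A(k := w)) = (\<Sum>p | p permutes {..<n}. of_int (sign p) * (w (p k) * (\<Prod>i\<in>{..<n}-{k}. A i (p i))))"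
  unfolding ldet_def
proof (rule sum.cong)
  fix p
  have "(\<Prod>i<n. (A(k := w)) i (p i)) = (A(k := w)) k (p k) * (\<Prod>i\<in>{..<n}-{k}. (A(k := w)) i (p i))"
    using k by (intro prod.remove) auto
  also have "(\<Prod>i\<in>{..<n}-{k}. (A(k := w)) i (p i)) = (\<Prod>i\<in>{..<n}-{k}. A i (p i))"
    by (rule prod.cong) auto
  finally show "of_int (sign p) * (\<Prod>i<n. (A(k := w)) i (p i)) =
       of_int (sign p) * (w (p k) * (\<Prod>i\<in>{..<n}-{k}. A i (p i)))" by simp
qed simp

lemma ldet_add_row:
  assumes k: "k < n"
  shows "ldet n (A(k := (\<lambda>j. u j + v j))) = ldet n (A(k := u)) + ldet n (A(k := v))"
  unfolding ldet_row[OF k] by (simp add: sum.distrib[symmetric] distrib_right distrib_left)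

lemma ldet_mult_row:
  assumes k: "k < n"
  shows "ldet n (A(k := (\<lambda>j. r * u j))) = r * ldet n (A(k := u))"
  unfolding ldet_row[OF k] by (simp add: sum_distrib_left ac_simps)

lemma ldet_identical_rows:
  fixes A :: "nat \<Rightarrow> nat \<Rightarrow> 'a::comm_ring_1"
  assumes ij: "i < n" "j < n" "i \<noteq> j" and eq: "A i = A j"
  shows "ldet n A = 0"
proof -
  let ?t = "Transposition.transpose i j"
  let ?S = "{p. p permutes {..<n}}"
  let ?E = "{p \<in> ?S. evenperm p}"
  let ?O = "{p \<in> ?S. \<not> evenperm p}"
  define F where "F = (\<lambda>p. of_int (sign p) * (\<Prod>l<n. A l (p l)) :: 'a)"
  have tp: "?t permutes {..<n}" using ij by (intro permutes_swap_id) auto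
  have tperm: "permutation ?t" using permutation_permutes tp by blast
  have At: "A (?t l) = A l" for l
    using eq by (cases "l = i"; cases "l = j") auto
  have tnot: "\<not> evenperm ?t" using evenperm_swap[of i j] ij(3) by blast
  have Ft: "F (p \<circ> ?t) = - F p" if p: "p permutes {..<n}" for p
  proof -
    have pp: "permutation p" using permutation_permutes p by blast
    have "sign (p \<circ> ?t) = - sign p"
      using sign_compose[OF pp tperm] sign_swap_id[of i j] ij(3) by simp
    moreover have "(\<Prod>l<n. A l ((p \<circ> ?t) l)) = (\<Prod>l<n. A l (p l))"
    proof -
      have "(\<Prod>l<n. A l ((p \<circ> ?t) l)) = (\<Prod>l<n. A (?t l) ((p \<circ> ?t) (?t l)))"
        by (rule prod.permute[OF tp, unfolded comp_def, where g = "\<lambda>l. A l ((p \<circ> ?t) l)"])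
      also have "\<dots> = (\<Prod>l<n. A l (p l))" by (simp add: At)
      finally show ?thesis .
    qed
    ultimately show ?thesis unfolding F_def by simp
  qed
  have bij: "bij_betw (\<lambda>p. p \<circ> ?t) ?E ?O"
  proof (rule bij_betw_byWitness[where f' = "\<lambda>p. p \<circ> ?t"])
    show "\<forall>a\<in>?E. (a \<circ> ?t) \<circ> ?t = a" by (simp add: comp_assoc)
    show "\<forall>a\<in>?O. (a \<circ> ?t) \<circ> ?t = a" by (simp add: comp_assoc)
    show "(\<lambda>p. p \<circ> ?t) ` ?E \<subseteq> ?O"
    proof
      fix q assume "q \<in> (\<lambda>p. p \<circ> ?t) ` ?E"
      then obtain p where p: "p permutes {..<n}" "evenperm p" "q = p \<circ> ?t" by auto
      have "evenperm q = (evenperm p = evenperm ?t)"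
        unfolding p(3) by (rule evenperm_comp[OF permutation_permutes[THEN iffD2] tperm]) (use p in auto)
      then have "\<not> evenperm q" using p(2) tnot by blast
      moreover have "q permutes {..<n}" unfolding p(3) by (rule permutes_compose[OF tp p(1)])
      ultimately show "q \<in> ?O" by simp
    qed
    show "(\<lambda>p. p \<circ> ?t) ` ?O \<subseteq> ?E"
    proof
      fix q assume "q \<in> (\<lambda>p. p \<circ> ?t) ` ?O"
      then obtain p where p: "p permutes {..<n}" "\<not> evenperm p" "q = p \<circ> ?t" by auto
      have "evenperm q = (evenperm p = evenperm ?t)"
        unfolding p(3) by (rule evenperm_comp[OF permutation_permutes[THEN iffD2] tperm]) (use p in auto)
      then have "evenperm q" using p(2) tnot by blast
      moreover have "q permutes {..<n}" unfolding p(3) by (rule permutes_compose[OF tp p(1)])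
      ultimately show "q \<in> ?E" by simp
    qed
  qed
  have fin: "finite ?S" using finite_permutations[of "{..<n}"] by simp
  have "ldet n A = sum F ?S" unfolding ldet_def F_def ..
  also have "?S = ?E \<union> ?O" by auto
  also have "sum F (?E \<union> ?O) = sum F ?E + sum F ?O"
    by (rule sum.union_disjoint) (use fin in auto)
  also have "sum F ?O = sum (\<lambda>p. F (p \<circ> ?t)) ?E"
    by (rule sum.reindex_bij_betw[OF bij, symmetric])
  also have "\<dots> = sum (\<lambda>p. - F p) ?E" by (rule sum.cong) (auto simp: Ft)
  also have "sum F ?E + \<dots> = 0" by (simp add: sum_negf)
  finally show ?thesis .
qed

lemma ldet_id: "ldet n (\<lambda>i j. if i = j then 1 else (0::'a::comm_ring_1)) = 1"
proof -
  let ?S = "{p. p permutes {..<n}}"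
  define F where "F = (\<lambda>p. of_int (sign p) * (\<Prod>l<n. (if l = p l then 1 else 0)) :: 'a)"
  have fin: "finite ?S" using finite_permutations[of "{..<n}"] by simp
  have idS: "id \<in> ?S" by (simp add: permutes_id)
  have "ldet n (\<lambda>i j. if i = j then 1 else (0::'a)) = sum F ?S" unfolding ldet_def F_def ..
  also have "\<dots> = F id + sum F (?S - {id})" by (rule sum.remove[OF fin idS])
  also have "sum F (?S - {id}) = 0"
  proof (rule sum.neutral, rule ballI)
    fix p assume "p \<in> ?S - {id}"
    then have p: "p permutes {..<n}" "p \<noteq> id" by auto
    have "\<exists>l\<in>{..<n}. p l \<noteq> l"
    proof (rule ccontr)
      assume "\<not> ?thesis"
      then have "\<forall>l. p l = l" using p(1) unfolding permutes_def by auto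
      then have "p = id" by (simp add: fun_eq_iff)
      then show False using p(2) by simp
    qed
    then obtain l where l: "l < n" "p l \<noteq> l" by auto
    have "(\<Prod>l<n. (if l = p l then 1 else 0 :: 'a)) = 0"
      by (rule prod_zero[OF finite_lessThan bexI[of _ l]]) (use l in auto)
    then show "F p = 0" unfolding F_def by simp
  qed
  also have "F id = 1" unfolding F_def by simp
  finally show ?thesis by simp
qed

lemma dual_add: "\<phi> \<in> dual N \<Longrightarrow> \<psi> \<in> dual N \<Longrightarrow> (\<lambda>x. \<phi> x + \<psi> x) \<in> dual N"
  unfolding dual_def by (auto simp: distrib_left)

lemma dual_mul: "\<phi> \<in> dual N \<Longrightarrow> (\<lambda>x. r * \<phi> x) \<in> dual N"
  unfolding dual_def by (auto simp: distrib_left mult.left_commute)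

lemma dual_zero: "(\<lambda>x. 0) \<in> dual N"
  unfolding dual_def by auto

lemma dual_sum: "finite S \<Longrightarrow> \<forall>i\<in>S. g i \<in> dual N \<Longrightarrow> (\<lambda>x. \<Sum>i\<in>S. r i * g i x) \<in> dual N"
proof (induction S rule: finite_induct)
  case empty then show ?case using dual_zero by simp
next
  case (insert a S)
  have "(\<lambda>x. (\<lambda>x. r a * g a x) x + (\<lambda>x. \<Sum>i\<in>S. r i * g i x) x) \<in> dual N"
    using insert by (intro dual_add dual_mul) auto
  then show ?case using insert.hyps by simp
qed

lemma dual_linon: "\<phi> \<in> dual N \<Longrightarrow> linon N \<phi>"
  unfolding dual_def linon_def by blast

lemma E_dual: assumes "submod n N" shows "(\<lambda>x. if x \<in> N then x i else 0) \<in> dual N"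
  unfolding dual_def using submod_add[OF assms] submod_smult[OF assms] by auto

lemma alt_linsum:
  assumes alt: "alt_form n (dual N) \<Phi>" and fD: "\<forall>l<n. f l \<in> dual N" and k: "k < n"
  shows "finite S \<Longrightarrow> \<forall>i\<in>S. g i \<in> dual N \<Longrightarrow>
    \<Phi> (f(k := (\<lambda>x. \<Sum>i\<in>S. r i * g i x))) = (\<Sum>i\<in>S. r i * \<Phi> (f(k := g i)))"
proof (induction S rule: finite_induct)
  case empty
  have hom: "\<forall>f k r \<phi>. (\<forall>i<n. f i \<in> dual N) \<and> k < n \<and> \<phi> \<in> dual N \<longrightarrow>
        \<Phi> (f(k := (\<lambda>x. r * \<phi> x))) = r * \<Phi> (f(k := \<phi>))"
    using alt unfolding alt_form_def by blast
  have h: "\<Phi> (f(k := (\<lambda>x. 0 * f k x))) = 0 * \<Phi> (f(k := f k))"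
    using hom fD k by blast
  have e: "(\<lambda>x. \<Sum>i\<in>{}. r i * g i x) = (\<lambda>x. 0 * f k x)" by simp
  show ?case by (subst e, subst h) simp
next
  case (insert a S)
  have add: "\<forall>f k \<phi> \<psi>. (\<forall>i<n. f i \<in> dual N) \<and> k < n \<and> \<phi> \<in> dual N \<and> \<psi> \<in> dual N \<longrightarrow>
        \<Phi> (f(k := (\<lambda>x. \<phi> x + \<psi> x))) = \<Phi> (f(k := \<phi>)) + \<Phi> (f(k := \<psi>))"
    using alt unfolding alt_form_def by blast
  have hom: "\<forall>f k r \<phi>. (\<forall>i<n. f i \<in> dual N) \<and> k < n \<and> \<phi> \<in> dual N \<longrightarrow>
        \<Phi> (f(k := (\<lambda>x. r * \<phi> x))) = r * \<Phi> (f(k := \<phi>))"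
    using alt unfolding alt_form_def by blast
  have ga: "g a \<in> dual N" using insert.prems by simp
  have gS: "\<forall>i\<in>S. g i \<in> dual N" using insert.prems by simp
  have d1: "(\<lambda>x. r a * g a x) \<in> dual N" by (rule dual_mul[OF ga])
  have d2: "(\<lambda>x. \<Sum>i\<in>S. r i * g i x) \<in> dual N" by (rule dual_sum[OF insert.hyps(1) gS])
  have "(\<lambda>x. \<Sum>i\<in>insert a S. r i * g i x) = (\<lambda>x. (\<lambda>x. r a * g a x) x + (\<lambda>x. \<Sum>i\<in>S. r i * g i x) x)"
    using insert.hyps by simp
  then have "\<Phi> (f(k := (\<lambda>x. \<Sum>i\<in>insert a S. r i * g i x))) =
      \<Phi> (f(k := (\<lambda>x. r a * g a x))) + \<Phi> (f(k := (\<lambda>x. \<Sum>i\<in>S. r i * g i x)))"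
    using add fD k d1 d2 by simp
  also have "\<Phi> (f(k := (\<lambda>x. r a * g a x))) = r a * \<Phi> (f(k := g a))"
    using hom fD k ga by blast
  also have "\<Phi> (f(k := (\<lambda>x. \<Sum>i\<in>S. r i * g i x))) = (\<Sum>i\<in>S. r i * \<Phi> (f(k := g i)))"
    using insert.IH gS by blast
  finally have X: "\<Phi> (f(k := (\<lambda>x. \<Sum>i\<in>insert a S. r i * g i x))) =
     r a * \<Phi> (f(k := g a)) + (\<Sum>i\<in>S. r i * \<Phi> (f(k := g i)))" .
  show ?case by (rule X[THEN trans]) (rule sum.insert[OF insert.hyps, symmetric])
qed

theorem propositionC8:
  fixes scale :: "'a::comm_ring_1 \<Rightarrow> 'm::ab_group_add \<Rightarrow> 'm"
    and n :: nat and f :: "(nat \<Rightarrow> 'a) \<Rightarrow> 'm"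
  assumes "zero_dim_gorenstein TYPE('a)"
    and "module scale"
    and "n > 0"
    and "\<forall>x\<in>freemod n. \<forall>y\<in>freemod n. f (\<lambda>i. x i + y i) = f x + f y"
    and "\<forall>r. \<forall>x\<in>freemod n. f (\<lambda>i. r * x i) = scale r (f x)"
    and "f ` freemod n = UNIV"
  shows "char_ideal n {x \<in> freemod n. f x = 0} = annihilator scale"
proof -
  have inj: "self_injective TYPE('a)" and noeth: "noetherian_ring TYPE('a)"
    using assms(1) unfolding zero_dim_gorenstein_def by auto
  note fadd = assms(4) and fmul = assms(5)
  define N where "N = {x \<in> freemod n. f x = 0}"
  have z_free: "(\<lambda>i. 0::'a) \<in> freemod n" unfolding freemod_def by simp
  have add_free: "(\<lambda>i. x i + y i) \<in> freemod n" if "x \<in> freemod n" "y \<in> freemod n" for x y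
    using that unfolding freemod_def by simp
  have mul_free: "(\<lambda>i. r * x i) \<in> freemod n" if "x \<in> freemod n" for x r
    using that unfolding freemod_def by simp
  have f0: "f (\<lambda>i. 0) = 0"
  proof -
    have "f (\<lambda>i. 0 * (\<lambda>i. 0::'a) i) = scale 0 (f (\<lambda>i. 0))" by (rule fmul[rule_format, OF z_free])
    then show ?thesis using module.scale_zero_left[OF assms(2)] by simp
  qed
  have subN: "submod n N"
    unfolding submod_def N_def
  proof (intro conjI ballI allI)
    show "{x \<in> freemod n. f x = 0} \<subseteq> freemod n" by auto
    show "(\<lambda>i. 0) \<in> {x \<in> freemod n. f x = 0}" using z_free f0 by simp
  next
    fix x y assume "x \<in> {x \<in> freemod n. f x = 0}" "y \<in> {x \<in> freemod n. f x = 0}"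
    then have x: "x \<in> freemod n" "f x = 0" and y: "y \<in> freemod n" "f y = 0" by auto
    show "(\<lambda>i. x i + y i) \<in> {x \<in> freemod n. f x = 0}"
      using add_free[OF x(1) y(1)] fadd[rule_format, OF x(1) y(1)] x(2) y(2) by simp
  next
    fix r x assume "x \<in> {x \<in> freemod n. f x = 0}"
    then have x: "x \<in> freemod n" "f x = 0" by auto
    show "(\<lambda>i. r * x i) \<in> {x \<in> freemod n. f x = 0}"
      using mul_free[OF x(1)] fmul[rule_format, OF x(1), of r] x(2) module.scale_zero_right[OF assms(2)] by simp
  qed
  have annI: "r \<in> annihilator scale \<longleftrightarrow> (\<forall>x\<in>freemod n. (\<lambda>i. r * x i) \<in> N)" for r
  proof
    assume r: "r \<in> annihilator scale"
    show "\<forall>x\<in>freemod n. (\<lambda>i. r * x i) \<in> N"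
    proof
      fix x :: "nat \<Rightarrow> 'a" assume x: "x \<in> freemod n"
      have "f (\<lambda>i. r * x i) = scale r (f x)" by (rule fmul[rule_format, OF x])
      also have "\<dots> = 0" using r unfolding annihilator_def by simp
      finally show "(\<lambda>i. r * x i) \<in> N" unfolding N_def using mul_free[OF x] by simp
    qed
  next
    assume r: "\<forall>x\<in>freemod n. (\<lambda>i. r * x i) \<in> N"
    show "r \<in> annihilator scale"
      unfolding annihilator_def
    proof (rule CollectI, rule allI)
      fix m
      have "m \<in> f ` freemod n" using assms(6) by simp
      then obtain x where x: "x \<in> freemod n" "m = f x" by auto
      have "scale r m = f (\<lambda>i. r * x i)" using fmul[rule_format, OF x(1), of r] x(2) by simp
      also have "\<dots> = 0" using r x unfolding N_def by simp
      finally show "scale r m = 0" .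
    qed
  qed
  define E where "E = (\<lambda>i x. if x \<in> N then x i else (0::'a))"
  have ED: "E i \<in> dual N" for i unfolding E_def by (rule E_dual[OF subN])
  have "char_ideal n N = annihilator scale"
  proof (rule set_eqI, rule iffI)
    fix c assume "c \<in> char_ideal n N"
    then obtain \<Phi> where c: "c = \<Phi> E" and alt: "alt_form n (dual N) \<Phi>"
      unfolding char_ideal_def E_def by blast
    have hom: "\<forall>f k r \<phi>. (\<forall>i<n. f i \<in> dual N) \<and> k < n \<and> \<phi> \<in> dual N \<longrightarrow>
        \<Phi> (f(k := (\<lambda>x. r * \<phi> x))) = r * \<Phi> (f(k := \<phi>))"
      using alt unfolding alt_form_def by blast
    have alter: "\<forall>f i j. (\<forall>l<n. f l \<in> dual N) \<and> i < n \<and> j < n \<and> i \<noteq> j \<and> f i = f j \<longrightarrow> \<Phi> f = 0"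
      using alt unfolding alt_form_def by blast
    have key: "c * kk j = 0" if kk: "\<forall>y\<in>N. (\<Sum>i<n. kk i * y i) = 0" and j: "j < n" for kk j
    proof -
      let ?S = "{..<n} - {j}"
      define \<psi> where "\<psi> = (\<lambda>x. \<Sum>i\<in>?S. (- kk i) * E i x)"
      have h\<psi>: "(\<lambda>x. kk j * E j x) = \<psi>"
      proof
        fix x
        show "kk j * E j x = \<psi> x"
        proof (cases "x \<in> N")
          case True
          have "0 = (\<Sum>i<n. kk i * x i)" using kk True by simp
          also have "\<dots> = kk j * x j + (\<Sum>i\<in>?S. kk i * x i)"
            using j by (intro sum.remove) auto
          finally have "kk j * x j = - (\<Sum>i\<in>?S. kk i * x i)" by (simp add: eq_neg_iff_add_eq_0 add.commute)
          also have "\<dots> = (\<Sum>i\<in>?S. (- kk i) * x i)" by (simp add: sum_negf)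
          finally show ?thesis unfolding \<psi>_def E_def using True by simp
        next
          case False
          then show ?thesis unfolding \<psi>_def E_def by simp
        qed
      qed
      have EnD: "\<forall>l<n. E l \<in> dual N" using ED by blast
      have "kk j * c = kk j * \<Phi> (E(j := E j))" using c by simp
      also have "\<dots> = \<Phi> (E(j := (\<lambda>x. kk j * E j x)))"
        using hom EnD j ED by metis
      also have "\<dots> = \<Phi> (E(j := \<psi>))" using h\<psi> by simp
      also have "\<dots> = (\<Sum>i\<in>?S. (- kk i) * \<Phi> (E(j := E i)))"
        unfolding \<psi>_def by (rule alt_linsum[OF alt EnD j]) (use ED in auto)
      also have "\<dots> = 0"
      proof (rule sum.neutral, rule ballI)
        fix i assume i: "i \<in> ?S"
        have "\<Phi> (E(j := E i)) = 0"
        proof -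
          have "(\<forall>l<n. (E(j := E i)) l \<in> dual N) \<and> i < n \<and> j < n \<and> i \<noteq> j \<and> (E(j := E i)) i = (E(j := E i)) j"
            using i j ED by auto
          then show ?thesis using alter by blast
        qed
        then show "(- kk i) * \<Phi> (E(j := E i)) = 0" by simp
      qed
      finally show ?thesis by (simp add: mult.commute)
    qed
    have "\<forall>x\<in>freemod n. (\<lambda>i. c * x i) \<in> N"
    proof
      fix x :: "nat \<Rightarrow> 'a" assume x: "x \<in> freemod n"
      show "(\<lambda>i. c * x i) \<in> N"
      proof (rule dann[OF inj noeth subN mul_free[OF x]], rule allI, rule impI)
        fix kk assume kk: "\<forall>y\<in>N. (\<Sum>i<n. kk i * y i) = 0"
        have "(\<Sum>i<n. kk i * (c * x i)) = (\<Sum>i<n. (c * kk i) * x i)" by (simp add: ac_simps)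
        also have "\<dots> = 0" using key[OF kk] by simp
        finally show "(\<Sum>i<n. kk i * (c * x i)) = 0" .
      qed
    qed
    then show "c \<in> annihilator scale" using annI by blast
  next
    fix c assume "c \<in> annihilator scale"
    then have cN: "\<forall>x\<in>freemod n. (\<lambda>i. c * x i) \<in> N" using annI by blast
    define ej where "ej = (\<lambda>(j::nat) (i::nat). if i = j then (1::'a) else 0)"
    define ce where "ce = (\<lambda>j i. c * ej j i)"
    have ceN: "ce j \<in> N" if "j < n" for j
      unfolding ce_def using cN that unfolding freemod_def ej_def by auto
    define rep where "rep = (\<lambda>\<psi>. SOME a. \<forall>y\<in>N. \<psi> y = (\<Sum>i<n. a i * y i))"
    have repD: "\<forall>y\<in>N. \<psi> y = (\<Sum>i<n. rep \<psi> i * y i)" if "\<psi> \<in> dual N" for \<psi>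
    proof -
      have "\<exists>a. \<forall>y\<in>N. \<psi> y = (\<Sum>i<n. a i * y i)"
        by (rule ext_lemma[OF inj subN dual_linon[OF that]])
      then show ?thesis unfolding rep_def by (rule someI_ex)
    qed
    have crep: "c * rep \<psi> j = \<psi> (ce j)" if "\<psi> \<in> dual N" "j < n" for \<psi> j
    proof -
      have "\<psi> (ce j) = (\<Sum>i<n. rep \<psi> i * ce j i)" using repD[OF that(1)] ceN[OF that(2)] by blast
      also have "\<dots> = (\<Sum>i<n. (if i = j then 1 else 0) * (c * rep \<psi> i))"
        by (rule sum.cong) (auto simp: ce_def ej_def)
      also have "\<dots> = c * rep \<psi> j" by (rule sum_delta_mult[OF that(2)])
      finally show ?thesis by simp
    qed
    define \<Phi> where "\<Phi> = (\<lambda>F. c * ldet n (\<lambda>i j. rep (F i) j))"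
    have altP: "alt_form n (dual N) \<Phi>"
      unfolding alt_form_def
    proof (intro conjI allI impI)
      fix F k \<phi> \<psi>
      assume a: "(\<forall>i<n. F i \<in> dual N) \<and> k < n \<and> \<phi> \<in> dual N \<and> \<psi> \<in> dual N"
      let ?A = "\<lambda>i j. rep (F i) j"
      have s: "(\<lambda>x. \<phi> x + \<psi> x) \<in> dual N" using a dual_add by blast
      have "\<Phi> (F(k := (\<lambda>x. \<phi> x + \<psi> x))) = c * ldet n (?A(k := (\<lambda>j. rep \<phi> j + rep \<psi> j)))"
        unfolding \<Phi>_def
      proof (rule ldet_cong_c, intro allI impI)
        fix i j assume ij: "i < n" "j < n"
        show "c * rep ((F(k := (\<lambda>x. \<phi> x + \<psi> x))) i) j = c * (?A(k := (\<lambda>j. rep \<phi> j + rep \<psi> j))) i j"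
        proof (cases "i = k")
          case True
          have "c * rep (\<lambda>x. \<phi> x + \<psi> x) j = \<phi> (ce j) + \<psi> (ce j)" using crep[OF s ij(2)] by simp
          also have "\<dots> = c * (rep \<phi> j + rep \<psi> j)" using crep[OF _ ij(2)] a by (simp add: distrib_left)
          finally show ?thesis using True by simp
        qed simp
      qed
      also have "\<dots> = c * ldet n (?A(k := rep \<phi>)) + c * ldet n (?A(k := rep \<psi>))"
        using ldet_add_row[of k n ?A "rep \<phi>" "rep \<psi>"] a by (simp add: distrib_left)
      also have "?A(k := rep \<phi>) = (\<lambda>i j. rep ((F(k := \<phi>)) i) j)" by (auto simp: fun_eq_iff)
      also have "?A(k := rep \<psi>) = (\<lambda>i j. rep ((F(k := \<psi>)) i) j)" by (auto simp: fun_eq_iff)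
      finally show "\<Phi> (F(k := (\<lambda>x. \<phi> x + \<psi> x))) = \<Phi> (F(k := \<phi>)) + \<Phi> (F(k := \<psi>))"
        unfolding \<Phi>_def .
    next
      fix F k r \<phi>
      assume a: "(\<forall>i<n. F i \<in> dual N) \<and> k < n \<and> \<phi> \<in> dual N"
      let ?A = "\<lambda>i j. rep (F i) j"
      have s: "(\<lambda>x. r * \<phi> x) \<in> dual N" using a dual_mul by blast
      have "\<Phi> (F(k := (\<lambda>x. r * \<phi> x))) = c * ldet n (?A(k := (\<lambda>j. r * rep \<phi> j)))"
        unfolding \<Phi>_def
      proof (rule ldet_cong_c, intro allI impI)
        fix i j assume ij: "i < n" "j < n"
        show "c * rep ((F(k := (\<lambda>x. r * \<phi> x))) i) j = c * (?A(k := (\<lambda>j. r * rep \<phi> j))) i j"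
        proof (cases "i = k")
          case True
          have "c * rep (\<lambda>x. r * \<phi> x) j = r * \<phi> (ce j)" using crep[OF s ij(2)] by simp
          also have "\<dots> = c * (r * rep \<phi> j)"
          proof -
            have pd: "\<phi> \<in> dual N" using a by blast
            show ?thesis using crep[OF pd ij(2)] by (metis mult.left_commute)
          qed
          finally show ?thesis using True by simp
        qed simp
      qed
      also have "\<dots> = r * (c * ldet n (?A(k := rep \<phi>)))"
        using ldet_mult_row[of k n ?A r "rep \<phi>"] a by (simp add: mult.left_commute)
      also have "?A(k := rep \<phi>) = (\<lambda>i j. rep ((F(k := \<phi>)) i) j)" by (auto simp: fun_eq_iff)
      finally show "\<Phi> (F(k := (\<lambda>x. r * \<phi> x))) = r * \<Phi> (F(k := \<phi>))"
        unfolding \<Phi>_def .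
    next
      fix F i j
      assume a: "(\<forall>l<n. F l \<in> dual N) \<and> i < n \<and> j < n \<and> i \<noteq> j \<and> F i = F j"
      have "ldet n (\<lambda>i j. rep (F i) j) = 0"
        by (rule ldet_identical_rows[of i n j]) (use a in auto)
      then show "\<Phi> F = 0" unfolding \<Phi>_def by simp
    qed
    have "\<Phi> E = c * ldet n (\<lambda>i j. if i = j then 1 else 0)"
      unfolding \<Phi>_def
    proof (rule ldet_cong_c, intro allI impI)
      fix i j assume ij: "i < n" "j < n"
      have "c * rep (E i) j = E i (ce j)" by (rule crep[OF ED ij(2)])
      also have "\<dots> = c * (if i = j then 1 else 0)"
        using ceN[OF ij(2)] unfolding E_def ce_def ej_def by simp
      finally show "c * rep (E i) j = c * (if i = j then 1 else 0)" .
    qed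
    then have "\<Phi> E = c" by (simp add: ldet_id)
    then show "c \<in> char_ideal n N"
      using altP unfolding char_ideal_def E_def by blast
  qed
  then show ?thesis unfolding N_def .
qed

end
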